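(* Let $k\geq 3$. For every $c>0$ there exists $q_c\in(0,1)$ such that, with probability $1-o(1)$ as $n\to\infty$, a random instance $\Phi$ of 1-in-$k$ SAT on $n$ variables with clause/variable ratio $c$ has no two satisfying assignments $A,B$ with $\mathrm{overlap}(A,B)<q_c$.
   Context: An instance of 1-in-$k$ SAT on variables $x_1,\dots,x_n$ is a conjunction of clauses, each consisting of exactly $k$ literals on $k$ distinct variables; an assignment satisfies it if in every clause exactly one literal is true. The random instance with clause/variable ratio $c$ is taken in the constant probability model: each of the $2^k\binom{n}{k}$ possible clauses is included independently with probability $2^{-k}p$, where $p\binom nk=cn$. The overlap of two assignments $A,B$ is $\mathrm{overlap}(A,B)=|\{i:A(x_i)=B(x_i)\}|/n$. *)

theory Defs
  imports Complex_Main "HOL-Library.FuncSet"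
begin

(* Variables are x_0,...,x_{n-1} (indices < n). A literal is a pair (i, b):
   it is the positive literal x_i if b = True and the negated literal if b = False. *)
type_synonym literal = "nat \<times> bool"

definition clauses :: "nat \<Rightarrow> nat \<Rightarrow> literal set set" where
  "clauses n k = {L. finite L \<and> card L = k \<and> inj_on fst L \<and> fst ` L \<subseteq> {..<n}}"

definition assignments :: "nat \<Rightarrow> (nat \<Rightarrow> bool) set" where
  "assignments n = {..<n} \<rightarrow>\<^sub>E (UNIV :: bool set)"

definition lit_true :: "(nat \<Rightarrow> bool) \<Rightarrow> literal \<Rightarrow> bool" where
  "lit_true A l \<longleftrightarrow> A (fst l) = snd l"

definition sat_1ink :: "literal set set \<Rightarrow> (nat \<Rightarrow> bool) \<Rightarrow> bool" where
  "sat_1ink \<Phi> A \<longleftrightarrow> (\<forall>L\<in>\<Phi>. card {l\<in>L. lit_true A l} = 1)"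

definition overlap :: "nat \<Rightarrow> (nat \<Rightarrow> bool) \<Rightarrow> (nat \<Rightarrow> bool) \<Rightarrow> real" where
  "overlap n A B = real (card {i\<in>{..<n}. A i = B i}) / real n"

(* p with p * (n choose k) = c * n; each clause included with probability 2^{-k} p *)
definition clause_prob :: "nat \<Rightarrow> nat \<Rightarrow> real \<Rightarrow> real" where
  "clause_prob n k c = (c * real n / real (n choose k)) / 2 ^ k"

definition inst_prob :: "nat \<Rightarrow> nat \<Rightarrow> real \<Rightarrow> literal set set \<Rightarrow> real" where
  "inst_prob n k c \<Phi> = clause_prob n k c ^ card \<Phi> *
      (1 - clause_prob n k c) ^ (card (clauses n k) - card \<Phi>)"

definition rprob :: "nat \<Rightarrow> nat \<Rightarrow> real \<Rightarrow> (literal set set \<Rightarrow> bool) \<Rightarrow> real" where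
  "rprob n k c P = (\<Sum>\<Phi>\<in>{\<Phi>. \<Phi> \<subseteq> clauses n k \<and> P \<Phi>}. inst_prob n k c \<Phi>)"

end

theory Submission
  imports Defs
begin

lemma pow_sum:
  fixes a b :: real
  assumes "finite V"
  shows "(\<Sum>\<Phi>\<in>Pow V. a ^ card \<Phi> * b ^ card (V - \<Phi>)) = (a + b) ^ card V"
  using assms
proof (induction V rule: finite_induct)
  case empty
  then show ?case by simp
next
  case (insert x F)
  have disj: "Pow F \<inter> insert x ` Pow F = {}" using insert by auto
  have inj: "inj_on (insert x) (Pow F)" using insert unfolding inj_on_def by (auto dest: subsetD)
  have fin: "finite (Pow F)" "finite (insert x ` Pow F)" using insert by auto
  have s1: "(\<Sum>\<Phi>\<in>Pow F. a ^ card \<Phi> * b ^ card (insert x F - \<Phi>)) = b * (a+b)^card F"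
  proof -
    have "\<And>\<Phi>. \<Phi> \<in> Pow F \<Longrightarrow> a ^ card \<Phi> * b ^ card (insert x F - \<Phi>) = b * (a ^ card \<Phi> * b ^ card (F - \<Phi>))"
    proof -
      fix \<Phi> assume "\<Phi> \<in> Pow F"
      then have "insert x F - \<Phi> = insert x (F - \<Phi>)" using insert by auto
      then have "card (insert x F - \<Phi>) = Suc (card (F - \<Phi>))" using insert by simp
      then show "a ^ card \<Phi> * b ^ card (insert x F - \<Phi>) = b * (a ^ card \<Phi> * b ^ card (F - \<Phi>))" by simp
    qed
    then have "(\<Sum>\<Phi>\<in>Pow F. a ^ card \<Phi> * b ^ card (insert x F - \<Phi>)) = (\<Sum>\<Phi>\<in>Pow F. b * (a ^ card \<Phi> * b ^ card (F - \<Phi>)))"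
      by (rule sum.cong[OF refl])
    also have "\<dots> = b * (a+b)^card F" using insert by (simp add: sum_distrib_left[symmetric])
    finally show ?thesis .
  qed
  have s2: "(\<Sum>\<Phi>\<in>insert x ` Pow F. a ^ card \<Phi> * b ^ card (insert x F - \<Phi>)) = a * (a+b)^card F"
  proof -
    have "(\<Sum>\<Phi>\<in>insert x ` Pow F. a ^ card \<Phi> * b ^ card (insert x F - \<Phi>))
       = (\<Sum>\<Phi>\<in>Pow F. a ^ card (insert x \<Phi>) * b ^ card (insert x F - insert x \<Phi>))"
      by (rule sum.reindex[OF inj, unfolded comp_def])
    also have "\<dots> = (\<Sum>\<Phi>\<in>Pow F. a * (a ^ card \<Phi> * b ^ card (F - \<Phi>)))"
    proof (rule sum.cong[OF refl])
      fix \<Phi> assume h: "\<Phi> \<in> Pow F"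
      then have "finite \<Phi>" "x \<notin> \<Phi>" using insert finite_subset by auto
      moreover have "insert x F - insert x \<Phi> = F - \<Phi>" using insert by auto
      ultimately show "a ^ card (insert x \<Phi>) * b ^ card (insert x F - insert x \<Phi>) = a * (a ^ card \<Phi> * b ^ card (F - \<Phi>))"
        by simp
    qed
    also have "\<dots> = a * (a+b)^card F" using insert by (simp add: sum_distrib_left[symmetric])
    finally show ?thesis .
  qed
  have "Pow (insert x F) = Pow F \<union> insert x ` Pow F" by (rule Pow_insert)
  then have "(\<Sum>\<Phi>\<in>Pow (insert x F). a ^ card \<Phi> * b ^ card (insert x F - \<Phi>))
     = (\<Sum>\<Phi>\<in>Pow F. a ^ card \<Phi> * b ^ card (insert x F - \<Phi>)) + (\<Sum>\<Phi>\<in>insert x ` Pow F. a ^ card \<Phi> * b ^ card (insert x F - \<Phi>))"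
    using sum.union_disjoint[OF fin disj] by simp
  also have "\<dots> = (a+b)^card (insert x F)" using s1 s2 insert by (simp add: algebra_simps)
  finally show ?case .
qed

definition bp :: "'a set \<Rightarrow> real \<Rightarrow> ('a set \<Rightarrow> bool) \<Rightarrow> real" where
  "bp U p P = (\<Sum>\<Phi>\<in>{\<Phi>. \<Phi> \<subseteq> U \<and> P \<Phi>}. p ^ card \<Phi> * (1 - p) ^ (card U - card \<Phi>))"

lemma rprob_bp: "rprob n k c P = bp (clauses n k) (clause_prob n k c) P"
  unfolding rprob_def bp_def inst_prob_def by simp

lemma bp_avoid:
  assumes "finite U" "S \<subseteq> U"
  shows "bp U p (\<lambda>\<Phi>. \<Phi> \<inter> S = {}) = (1 - p) ^ card S"
proof -
  have set: "{\<Phi>. \<Phi> \<subseteq> U \<and> \<Phi> \<inter> S = {}} = Pow (U - S)" by auto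
  have "\<And>\<Phi>. \<Phi> \<in> Pow (U - S) \<Longrightarrow> p ^ card \<Phi> * (1 - p) ^ (card U - card \<Phi>)
      = (1-p)^card S * (p ^ card \<Phi> * (1 - p) ^ card (U - S - \<Phi>))"
  proof -
    fix \<Phi> assume h: "\<Phi> \<in> Pow (U - S)"
    have "finite \<Phi>" using h assms finite_subset by blast
    have "card U - card \<Phi> = card (U - \<Phi>)" using h assms by (subst card_Diff_subset) (auto intro: finite_subset)
    also have "U - \<Phi> = (U - S - \<Phi>) \<union> S" using h assms by auto
    also have "card \<dots> = card (U - S - \<Phi>) + card S" using assms by (subst card_Un_disjoint) (auto intro: finite_subset)
    finally show "p ^ card \<Phi> * (1 - p) ^ (card U - card \<Phi>)
      = (1-p)^card S * (p ^ card \<Phi> * (1 - p) ^ card (U - S - \<Phi>))" by (simp add: power_add)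
  qed
  then have "bp U p (\<lambda>\<Phi>. \<Phi> \<inter> S = {}) = (\<Sum>\<Phi>\<in>Pow (U - S). (1-p)^card S * (p ^ card \<Phi> * (1 - p) ^ card (U - S - \<Phi>)))"
    unfolding bp_def set by (rule sum.cong[OF refl])
  also have "\<dots> = (1-p)^card S" using assms pow_sum[of "U - S" p "1-p"] by (simp add: sum_distrib_left[symmetric])
  finally show ?thesis .
qed

lemma bp_all:
  assumes "finite U" shows "bp U p (\<lambda>_. True) = 1"
  using bp_avoid[OF assms, of "{}"] by simp


lemma bp_compl:
  assumes "finite U"
  shows "bp U p (\<lambda>\<Phi>. \<not> P \<Phi>) = 1 - bp U p P"
proof -
  have fin: "finite {\<Phi>. \<Phi> \<subseteq> U}" using assms by simp
  have "bp U p (\<lambda>_. True) = bp U p P + bp U p (\<lambda>\<Phi>. \<not> P \<Phi>)"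
    unfolding bp_def
    by (rule sum.subset_diff[of "{\<Phi>. \<Phi> \<subseteq> U \<and> P \<Phi>}", OF _ finite_subset[OF _ fin], simplified, THEN trans])
       (auto intro!: sum.cong simp: set_diff_eq)
  then show ?thesis using bp_all[OF assms] by simp
qed

lemma bp_mono:
  assumes "finite U" "0 \<le> p" "p \<le> 1" "\<And>\<Phi>. \<Phi> \<subseteq> U \<Longrightarrow> P \<Phi> \<Longrightarrow> Q \<Phi>"
  shows "bp U p P \<le> bp U p Q"
  unfolding bp_def using assms
  by (intro sum_mono2) (auto intro: finite_subset[of _ "Pow U"])

lemma bp_nonneg:
  assumes "0 \<le> p" "p \<le> 1" shows "0 \<le> bp U p P"
  unfolding bp_def using assms by (intro sum_nonneg) simp

lemma bp_union:
  assumes "finite U" "0 \<le> p" "p \<le> 1" "finite I"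
  shows "bp U p (\<lambda>\<Phi>. \<exists>T\<in>I. Q T \<Phi>) \<le> (\<Sum>T\<in>I. bp U p (Q T))"
  using assms(4)
proof (induction I rule: finite_induct)
  case empty
  then show ?case unfolding bp_def by simp
next
  case (insert x F)
  let ?f = "\<lambda>\<Phi>. p ^ card \<Phi> * (1 - p) ^ (card U - card \<Phi>)"
  have fin: "finite {\<Phi>. \<Phi> \<subseteq> U}" using assms by simp
  have "bp U p (\<lambda>\<Phi>. \<exists>T\<in>insert x F. Q T \<Phi>) = sum ?f ({\<Phi>. \<Phi> \<subseteq> U \<and> Q x \<Phi>} \<union> {\<Phi>. \<Phi> \<subseteq> U \<and> (\<exists>T\<in>F. Q T \<Phi>)})"
    unfolding bp_def by (rule sum.cong) auto
  also have "\<dots> \<le> sum ?f {\<Phi>. \<Phi> \<subseteq> U \<and> Q x \<Phi>} + sum ?f {\<Phi>. \<Phi> \<subseteq> U \<and> (\<exists>T\<in>F. Q T \<Phi>)}"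
    using assms by (subst sum_Un) (auto intro!: sum_nonneg intro: finite_subset[OF _ fin])
  also have "\<dots> \<le> bp U p (Q x) + (\<Sum>T\<in>F. bp U p (Q T))"
    using insert unfolding bp_def by simp
  finally show ?case using insert by simp
qed


definition clset :: "nat \<Rightarrow> nat \<Rightarrow> nat set \<Rightarrow> literal set set" where
  "clset n k T = (\<lambda>K. K \<times> {True}) ` {K. K \<subseteq> {..<n} - T \<and> card K = k}"

lemma clset_sub: assumes "k > 0" shows "clset n k T \<subseteq> clauses n k"
proof
  fix L assume "L \<in> clset n k T"
  then obtain K where K: "K \<subseteq> {..<n} - T" "card K = k" "L = K \<times> {True}" unfolding clset_def by auto
  then have "finite K" using finite_subset by blast
  then show "L \<in> clauses n k" using K unfolding clauses_def
    by (auto simp: card_cartesian_product inj_on_def)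
qed

lemma clset_card: "card (clset n k T) = (card ({..<n} - T)) choose k"
proof -
  have "inj_on (\<lambda>K. K \<times> {True}) {K. K \<subseteq> {..<n} - T \<and> card K = k}"
    unfolding inj_on_def by (metis fst_image_times insert_not_empty)
  then have "card (clset n k T) = card {K. K \<subseteq> {..<n} - T \<and> card K = k}"
    unfolding clset_def by (rule card_image)
  also have "\<dots> = card ({..<n} - T) choose k" by (rule n_subsets) simp
  finally show ?thesis .
qed

lemma clset_avoid:
  assumes "k \<ge> 3" "sat_1ink \<Phi> A" "sat_1ink \<Phi> B"
  shows "\<Phi> \<inter> clset n k {i\<in>{..<n}. A i = B i} = {}"
proof (rule ccontr)
  assume "\<Phi> \<inter> clset n k {i\<in>{..<n}. A i = B i} \<noteq> {}"
  then obtain K where K: "K \<subseteq> {..<n} - {i\<in>{..<n}. A i = B i}" "card K = k" "K \<times> {True} \<in> \<Phi>"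
    unfolding clset_def by auto
  have fin: "finite K" using K(1) finite_subset by blast
  have eq: "\<And>C. {l \<in> K \<times> {True}. lit_true C l} = (\<lambda>i. (i, True)) ` {i\<in>K. C i}"
    unfolding lit_true_def by auto
  have inj: "\<And>X. inj_on (\<lambda>i. (i, True)) X" unfolding inj_on_def by auto
  have a: "card {i\<in>K. A i} = 1"
  proof -
    have "card {l \<in> K \<times> {True}. lit_true A l} = 1" using assms(2) K(3) unfolding sat_1ink_def by blast
    then show ?thesis unfolding eq card_image[OF inj] .
  qed
  have b: "card {i\<in>K. B i} = 1"
  proof -
    have "card {l \<in> K \<times> {True}. lit_true B l} = 1" using assms(3) K(3) unfolding sat_1ink_def by blast
    then show ?thesis unfolding eq card_image[OF inj] .
  qed
  have "{i\<in>K. B i} = K - {i\<in>K. A i}" using K(1) by auto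
  then have "card {i\<in>K. B i} = k - 1" using a K(2) fin by (simp add: card_Diff_subset)
  then show False using b assms(1) by simp
qed

lemma binom_drop:
  assumes "s \<le> n"
  shows "real (n choose k) - real s * real ((n - 1) choose (k - 1)) \<le> real ((n - s) choose k)"
  using assms
proof (induction s)
  case 0
  then show ?case by simp
next
  case (Suc s)
  define m where "m = n - Suc s"
  have nm: "n - s = Suc m" using Suc.prems m_def by simp
  have rec: "real (Suc m choose k) \<le> real (m choose k) + real ((n - 1) choose (k - 1))"
  proof (cases k)
    case 0 then show ?thesis by simp
  next
    case (Suc j)
    have "m choose j \<le> (n - 1) choose j" using Suc.prems m_def by (intro binomial_right_mono) simp
    then show ?thesis using Suc by simp
  qed
  have "real (n choose k) - real (Suc s) * real ((n - 1) choose (k - 1))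
      = (real (n choose k) - real s * real ((n - 1) choose (k - 1))) - real ((n - 1) choose (k - 1))"
    by (simp add: algebra_simps)
  also have "\<dots> \<le> real (Suc m choose k) - real ((n - 1) choose (k - 1))"
    using Suc nm by simp
  also have "\<dots> \<le> real (m choose k)" using rec by simp
  finally show ?case unfolding m_def .
qed


lemma count_small:
  fixes x q :: real
  assumes "0 < x" "x \<le> 1"
  shows "real (card {T. T \<subseteq> {..<n} \<and> real (card T) < q * n}) \<le> (1 + x) ^ n / x powr (q * n)"
proof -
  let ?I = "{T. T \<subseteq> {..<n} \<and> real (card T) < q * n}"
  have fin: "finite ?I" by (rule finite_subset[of _ "Pow {..<n}"]) auto
  have xp: "x powr (q * n) > 0" using assms by simp
  have "real (card ?I) = (\<Sum>T\<in>?I. 1)" by simp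
  also have "\<dots> \<le> (\<Sum>T\<in>?I. x ^ card T / x powr (q * n))"
  proof (rule sum_mono)
    fix T assume "T \<in> ?I"
    then have "x powr (q * n) \<le> x powr (real (card T))" using assms by (intro powr_mono') auto
    also have "\<dots> = x ^ card T" using assms by (simp add: powr_realpow)
    finally show "1 \<le> x ^ card T / x powr (q * n)" using xp by simp
  qed
  also have "\<dots> \<le> (\<Sum>T\<in>Pow {..<n}. x ^ card T / x powr (q * n))"
    apply (rule sum_mono2)
    using assms by auto
  also have "\<dots> = (\<Sum>T\<in>Pow {..<n}. x ^ card T * 1 ^ card ({..<n} - T)) / x powr (q * n)"
    by (simp add: sum_divide_distrib)
  also have "\<dots> = (1 + x) ^ n / x powr (q * n)" using pow_sum[of "{..<n}" x 1] by (simp add: add.commute)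
  finally show ?thesis .
qed

lemma term_bound:
  fixes p q c :: real
  assumes k: "k \<ge> 1" and p: "p = c * real n / real (n choose k) / 2 ^ k" and c: "c > 0"
    and B: "n choose k > 0" and pl: "p \<le> 1"
    and q: "real k * q \<le> 1/2" "q \<ge> 0"
    and T: "T \<subseteq> {..<n}" "real (card T) < q * n"
  shows "(1 - p) ^ ((card ({..<n} - T)) choose k) \<le> exp (- (c / 2 ^ (k+1) * n))"
proof -
  define s where "s = card T"
  have sn: "s \<le> n" unfolding s_def using T card_mono[of "{..<n}" T] by simp
  have cs: "card ({..<n} - T) = n - s" unfolding s_def using T by (simp add: card_Diff_subset finite_subset)
  define Bk where "Bk = real (n choose k)"
  define B1 where "B1 = real ((n - 1) choose (k - 1))"
  have Bk0: "Bk > 0" using B unfolding Bk_def by simp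
  have nB1: "real n * B1 = real k * Bk"
  proof -
    have "k * (n choose k) = n * ((n - 1) choose (k - 1))" using k by (intro times_binomial_minus1_eq) simp
    then have "real (k * (n choose k)) = real (n * ((n - 1) choose (k - 1)))" by (simp only:)
    then show "real n * B1 = real k * Bk" by (simp add: Bk_def B1_def)
  qed
  have "real s * B1 \<le> Bk / 2"
  proof (cases "n = 0")
    case True then show ?thesis using sn Bk0 by simp
  next
    case False
    have B10: "B1 \<ge> 0" unfolding B1_def by simp
    have "real s * B1 \<le> (q * n) * B1" using T B10 unfolding s_def by (intro mult_right_mono) auto
    also have "\<dots> = q * (real k * Bk)" using nB1 by (simp add: algebra_simps)
    also have "\<dots> = (real k * q) * Bk" by simp
    also have "\<dots> \<le> (1/2) * Bk" using q Bk0 by (intro mult_right_mono) auto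
    finally show ?thesis by simp
  qed
  then have M: "real ((n - s) choose k) \<ge> Bk / 2"
    using binom_drop[OF sn, of k] unfolding Bk_def B1_def by simp
  have p0: "p \<ge> 0" using p c by simp
  have "(1 - p) ^ ((n - s) choose k) \<le> exp (- p) ^ ((n - s) choose k)"
    using pl by (intro power_mono) (auto simp: exp_ge_add_one_self[of "-p", simplified])
  also have "\<dots> = exp (- (p * real ((n - s) choose k)))"
    by (simp add: exp_of_nat_mult[symmetric] mult.commute)
  also have "\<dots> \<le> exp (- (c / 2 ^ (k+1) * n))"
  proof -
    have "p * (Bk / 2) \<le> p * real ((n - s) choose k)" using M p0 by (intro mult_left_mono) auto
    moreover have "p * (Bk / 2) = c / 2 ^ (k+1) * n" using p Bk0 unfolding Bk_def by (simp add: field_simps)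
    ultimately show ?thesis by simp
  qed
  finally show ?thesis using cs by simp
qed


lemma clauses_finite: "finite (clauses n k)"
proof -
  have "clauses n k \<subseteq> Pow ({..<n} \<times> UNIV)" unfolding clauses_def by auto
  then show ?thesis by (rule finite_subset) simp
qed

theorem theorem3:
  fixes k :: nat
  assumes "k \<ge> 3"
  shows "\<forall>c::real. c > 0 \<longrightarrow> (\<exists>q. 0 < q \<and> q < 1 \<and>
    (\<lambda>n. rprob n k c (\<lambda>\<Phi>. \<not> (\<exists>A\<in>assignments n. \<exists>B\<in>assignments n.
        sat_1ink \<Phi> A \<and> sat_1ink \<Phi> B \<and> overlap n A B < q))) \<longlonglongrightarrow> 1)"
proof (intro allI impI)
  fix c :: real assume c: "c > 0"
  define g where "g = min (c / 2^(k+1)) (1/2)"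
  define x where "x = g / 2"
  define q where "q = min (1 / (2 * real k)) (g / (4 * ln (1 / x)))"
  have g0: "g > 0" "g \<le> 1/2" "g \<le> c / 2^(k+1)" using c unfolding g_def by auto
  have x0: "x > 0" "x \<le> 1/4" using g0 unfolding x_def by auto
  have lnx: "ln (1 / x) > 0" using x0 by simp
  have k0: "real k \<ge> 3" using assms by simp
  have q0: "q > 0" unfolding q_def using g0 lnx k0 by simp
  have q1: "q \<le> 1 / (2 * real k)" unfolding q_def by simp
  have qk: "real k * q \<le> 1/2" using q1 k0 by (simp add: field_simps)
  have "3 * q \<le> real k * q" using k0 q0 by (intro mult_right_mono) auto
  then have qlt: "q < 1" using qk by linarith
  have qln: "q * ln (1 / x) \<le> g / 4"
  proof -
    have "q \<le> g / (4 * ln (1 / x))" unfolding q_def by simp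
    then show ?thesis using lnx by (simp add: field_simps)
  qed
  define E where "E = (\<lambda>n \<Phi>. \<exists>A\<in>assignments n. \<exists>B\<in>assignments n.
        sat_1ink \<Phi> A \<and> sat_1ink \<Phi> B \<and> overlap n A B < q)"
  define N where "N = nat \<lceil>c * real k ^ 2\<rceil> + k + 1"
  have main: "0 \<le> rprob n k c (E n) \<and> rprob n k c (E n) \<le> exp (- g / 4) ^ n"
    if n: "n \<ge> N" for n
  proof -
    have kn: "k \<le> n" "n > 0" using n unfolding N_def by auto
    have nc: "real n \<ge> c * real k ^ 2" using n unfolding N_def by linarith
    define Bk where "Bk = real (n choose k)"
    have Bpos: "n choose k > 0" using kn by simp
    have "(real n / real k) ^ 2 \<le> (real n / real k) ^ k"
      using kn k0 by (intro power_increasing) (auto simp: field_simps)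
    also have "\<dots> \<le> Bk" unfolding Bk_def by (rule binomial_ge_n_over_k_pow_k[OF kn(1)])
    finally have Bbig: "(real n / real k) ^ 2 \<le> Bk" .
    have "c * real n \<le> (real n / real k) ^ 2"
    proof -
      have "c * real n * real k ^ 2 \<le> real n * real n"
        using mult_left_mono[OF nc, of "real n"] by (simp add: algebra_simps)
      then show ?thesis using k0 by (simp add: field_simps power2_eq_square)
    qed
    then have cnB: "c * real n \<le> Bk" using Bbig by simp
    define p where "p = clause_prob n k c"
    have pdef: "p = c * real n / real (n choose k) / 2 ^ k" unfolding p_def clause_prob_def by simp
    have Bk0: "Bk > 0" unfolding Bk_def using Bpos by simp
    have p0: "p \<ge> 0" using pdef c by simp
    have p1: "p \<le> 1"
    proof -
      have "Bk * 1 \<le> Bk * 2 ^ k" using Bk0 by (intro mult_left_mono) auto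
      then have "c * real n \<le> 1 * (Bk * 2 ^ k)" using cnB by simp
      then have "c * real n / Bk / 2 ^ k \<le> 1" using Bk0 by (simp add: divide_divide_eq_left pos_divide_le_eq)
      then show ?thesis using pdef Bk_def by simp
    qed
    define I where "I = {T. T \<subseteq> {..<n} \<and> real (card T) < q * n}"
    have finI: "finite I" unfolding I_def by (rule finite_subset[of _ "Pow {..<n}"]) auto
    have fU: "finite (clauses n k)" by (rule clauses_finite)
    have "rprob n k c (E n) = bp (clauses n k) p (E n)" unfolding p_def by (rule rprob_bp)
    also have "\<dots> \<le> bp (clauses n k) p (\<lambda>\<Phi>. \<exists>T\<in>I. \<Phi> \<inter> clset n k T = {})"
    proof (rule bp_mono[OF fU p0 p1])
      fix \<Phi> assume "\<Phi> \<subseteq> clauses n k" "E n \<Phi>"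
      then obtain A B where AB: "sat_1ink \<Phi> A" "sat_1ink \<Phi> B" "overlap n A B < q"
        unfolding E_def by blast
      define T where "T = {i\<in>{..<n}. A i = B i}"
      have "real (card T) < q * n" using AB(3) kn unfolding overlap_def T_def by (simp add: field_simps)
      then have "T \<in> I" unfolding I_def T_def by auto
      moreover have "\<Phi> \<inter> clset n k T = {}" unfolding T_def by (rule clset_avoid[OF assms AB(1,2)])
      ultimately show "\<exists>T\<in>I. \<Phi> \<inter> clset n k T = {}" by blast
    qed
    also have "\<dots> \<le> (\<Sum>T\<in>I. bp (clauses n k) p (\<lambda>\<Phi>. \<Phi> \<inter> clset n k T = {}))"
      by (rule bp_union[OF fU p0 p1 finI])
    also have "\<dots> = (\<Sum>T\<in>I. (1 - p) ^ ((card ({..<n} - T)) choose k))"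
      using assms by (intro sum.cong refl) (simp add: bp_avoid[OF fU clset_sub] clset_card)
    also have "\<dots> \<le> (\<Sum>T\<in>I. exp (- (c / 2 ^ (k+1) * n)))"
    proof (rule sum_mono)
      fix T assume "T \<in> I"
      then show "(1 - p) ^ ((card ({..<n} - T)) choose k) \<le> exp (- (c / 2 ^ (k+1) * n))"
        unfolding I_def using assms pdef c Bpos p1 qk q0
        by (intro term_bound[of k p c n q T]) auto
    qed
    also have "\<dots> \<le> (\<Sum>T\<in>I. exp (- (g * n)))"
    proof (rule sum_mono)
      fix T
      have "g * real n \<le> c / 2 ^ (k+1) * real n" by (rule mult_right_mono[OF g0(3)]) simp
      then show "exp (- (c / 2 ^ (k+1) * n)) \<le> exp (- (g * n))" by simp
    qed
    also have "\<dots> = real (card I) * exp (- (g * n))" by simp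
    also have "\<dots> \<le> (1 + x) ^ n / x powr (q * n) * exp (- (g * n))"
      using count_small[OF x0(1), of n q] x0 unfolding I_def by (intro mult_right_mono) auto
    also have "\<dots> \<le> exp (- g / 4) ^ n"
    proof -
      have a: "(1 + x) ^ n \<le> exp (x * n)"
        using x0 by (subst mult.commute, subst exp_of_nat_mult) (intro power_mono, auto simp: add.commute)
      have b: "1 / x powr (q * n) = exp (q * n * ln (1 / x))"
        using x0 by (simp add: powr_def ln_div exp_minus inverse_eq_divide)
      have b2: "q * n * ln (1 / x) \<le> g / 4 * n"
      proof -
        have "(q * ln (1 / x)) * real n \<le> (g / 4) * real n" by (rule mult_right_mono[OF qln]) simp
        then show ?thesis by (simp add: algebra_simps)
      qed
      have "(1 + x) ^ n / x powr (q * n) * exp (- (g * n)) = (1 + x) ^ n * (1 / x powr (q * n)) * exp (- (g * n))"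
        by simp
      also have "\<dots> \<le> exp (x * n) * exp (g / 4 * n) * exp (- (g * n))"
        using a b b2 by (intro mult_right_mono mult_mono) auto
      also have "\<dots> = exp (real n * (- g / 4))"
        unfolding x_def by (simp add: exp_add[symmetric] algebra_simps)
      also have "\<dots> = exp (- g / 4) ^ n" by (rule exp_of_nat_mult)
      finally show ?thesis .
    qed
    finally have up: "rprob n k c (E n) \<le> exp (- g / 4) ^ n" .
    have "0 \<le> rprob n k c (E n)" unfolding rprob_bp by (rule bp_nonneg) (simp_all add: p0[unfolded p_def] p1[unfolded p_def])
    then show ?thesis using up by simp
  qed
  have lim0: "(\<lambda>n. rprob n k c (E n)) \<longlonglongrightarrow> 0"
  proof (rule tendsto_sandwich[of "\<lambda>_. 0" _ _ "\<lambda>n. exp (- g / 4) ^ n"])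
    show "\<forall>\<^sub>F n in sequentially. 0 \<le> rprob n k c (E n)"
      using main by (intro eventually_sequentiallyI[of N]) auto
    show "\<forall>\<^sub>F n in sequentially. rprob n k c (E n) \<le> exp (- g / 4) ^ n"
      using main by (intro eventually_sequentiallyI[of N]) auto
    show "(\<lambda>n. 0) \<longlonglongrightarrow> (0::real)" by simp
    show "(\<lambda>n. exp (- g / 4) ^ n) \<longlonglongrightarrow> 0" using g0 by (intro LIMSEQ_power_zero) simp
  qed
  have eq: "rprob n k c (\<lambda>\<Phi>. \<not> E n \<Phi>) = 1 - rprob n k c (E n)" for n
    unfolding rprob_bp by (rule bp_compl[OF clauses_finite])
  have "(\<lambda>n. 1 - rprob n k c (E n)) \<longlonglongrightarrow> 1 - 0"
    by (intro tendsto_diff tendsto_const lim0)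
  then have "(\<lambda>n. rprob n k c (\<lambda>\<Phi>. \<not> E n \<Phi>)) \<longlonglongrightarrow> 1" unfolding eq by simp
  then show "\<exists>q. 0 < q \<and> q < 1 \<and>
    (\<lambda>n. rprob n k c (\<lambda>\<Phi>. \<not> (\<exists>A\<in>assignments n. \<exists>B\<in>assignments n.
        sat_1ink \<Phi> A \<and> sat_1ink \<Phi> B \<and> overlap n A B < q))) \<longlonglongrightarrow> 1"
    using q0 qlt unfolding E_def by blast
qed


end
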